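(* Let $q$ be a query, let $\pi_q$ be a finite ranked list of documents, and for each $d\in\pi_q$ let $\lambda(d|\pi_q)\in\mathbb{R}$ be a fixed weight, $r(d)\in\{0,1\}$ a fixed (deterministic) relevance judgment, and $k(d)$ the position of $d$ in the logged ranked list for $q$. Let $U$ be a finite set of users and $P(\cdot|q)$ a probability distribution on $U$. A session is generated by drawing a user $u\sim P(\cdot|q)$ and then, for each $d\in\pi_q$, a binary examination variable $e(d)\in\{0,1\}$ with $P(e(d)=1\mid u)=P(e(d)=1|k(d),u)$; clicks are $c(d)=e(d)\cdot r(d)$, and $\vec c=(c(d))_{d\in\pi_q}$. Define the user-aware estimator $$\hat{l}_{user\text{-}aware}(S|q,\vec{c})=\sum_{d\in\pi_q}\frac{\lambda(d|\pi_q)\,c(d)}{\sum_{u'\in U}P(e(d)=1|k(d),u')\,P(u'|q)},$$ and the ideal loss $l_{ideal}(S|q)=\sum_{d\in\pi_q}\lambda(d|\pi_q)\,r(d)$. Suppose that for every $d\in\pi_q$ with $r(d)=1$ we have $\sum_{u\in U}P(e(d)=1|k(d),u)P(u|q)>0$. Then $$\mathbb{E}_{u,e}\big[\hat{l}_{user\text{-}aware}(S|q,\vec{c})\big]=l_{ideal}(S|q),$$ where the expectation is over the random user $u$ and the examinations $e$.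
   Context: This is the unbiased-learning-to-rank setting with a position-based examination model personalized per user: each user $u$ examines the document at position $k$ with probability $P(e=1|k,u)$, and a document is clicked iff it is examined and judged relevant (examination hypothesis $c=e\cdot r$). $S$ denotes the ranking model producing $\pi_q$; it enters only through the fixed weights $\lambda(d|\pi_q)$. Convention: a summand whose numerator $c(d)$ is $0$ is taken to be $0$ (relevant only for documents with $r(d)=0$, which are never clicked). *)

theory Defs
  imports "HOL-Probability.Probability"
begin

text \<open>Documents of the ranked list pi_q form the finite set D; lam d is the weight
lambda(d|pi_q) (the only way the ranker S enters); r d in {0,1} the relevance; k d the
logged position; U the finite user set with distribution pU; pe k u = P(e=1|k,u).\<close>

definition clicks :: "('d \<Rightarrow> real) \<Rightarrow> ('d \<Rightarrow> bool) \<Rightarrow> 'd \<Rightarrow> real" where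
  "clicks r e = (\<lambda>d. (if e d then 1 else 0) * r d)"

text \<open>Division by zero is 0 in Isabelle, matching the convention for unclicked documents.\<close>
definition user_aware_est ::
  "'d set \<Rightarrow> ('d \<Rightarrow> real) \<Rightarrow> ('d \<Rightarrow> nat) \<Rightarrow> (nat \<Rightarrow> 'u \<Rightarrow> real) \<Rightarrow> 'u set \<Rightarrow> 'u pmf
   \<Rightarrow> ('d \<Rightarrow> real) \<Rightarrow> real" where
  "user_aware_est D lam k pe U pU c =
     (\<Sum>d\<in>D. lam d * c d / (\<Sum>u'\<in>U. pe (k d) u' * pmf pU u'))"

definition ideal_loss :: "'d set \<Rightarrow> ('d \<Rightarrow> real) \<Rightarrow> ('d \<Rightarrow> real) \<Rightarrow> real" where
  "ideal_loss D lam r = (\<Sum>d\<in>D. lam d * r d)"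

definition session :: "'u pmf \<Rightarrow> ('u \<Rightarrow> ('d \<Rightarrow> bool) pmf) \<Rightarrow> ('u \<times> ('d \<Rightarrow> bool)) pmf" where
  "session pU E = bind_pmf pU (\<lambda>u. map_pmf (\<lambda>e. (u, e)) (E u))"

end

theory Submission
  imports Defs
begin

theorem theorem3p1:
  fixes D :: "'d set" and lam r :: "'d \<Rightarrow> real" and k :: "'d \<Rightarrow> nat"
    and U :: "'u set" and pU :: "'u pmf" and pe :: "nat \<Rightarrow> 'u \<Rightarrow> real"
    and E :: "'u \<Rightarrow> ('d \<Rightarrow> bool) pmf"
  assumes "finite D" and "finite U" and "set_pmf pU \<subseteq> U"
    and "\<forall>d\<in>D. r d \<in> {0, 1}"
    and "\<forall>u\<in>U. \<forall>d\<in>D. measure_pmf.prob (E u) {e. e d} = pe (k d) u"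
    and "\<forall>d\<in>D. r d = 1 \<longrightarrow> (\<Sum>u\<in>U. pe (k d) u * pmf pU u) > 0"
  shows "measure_pmf.expectation (session pU E)
           (\<lambda>(u, e). user_aware_est D lam k pe U pU (clicks r e)) = ideal_loss D lam r"
proof -
  define Z where "Z d = (\<Sum>u\<in>U. pe (k d) u * pmf pU u)" for d
  define A where "A d = {x :: 'u \<times> ('d \<Rightarrow> bool). snd x d}" for d
  have fin: "finite (set_pmf pU)" using assms(2,3) finite_subset by blast
  have PA: "measure_pmf.prob (session pU E) (A d) = Z d" if d: "d \<in> D" for d
  proof -
    have "emeasure (measure_pmf (session pU E)) (A d)
        = (\<integral>\<^sup>+u. emeasure (measure_pmf (E u)) {e. e d} \<partial>measure_pmf pU)"
      unfolding session_def A_def by (simp add: vimage_def)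
    also have "\<dots> = (\<integral>\<^sup>+u. ennreal (pe (k d) u) \<partial>measure_pmf pU)"
      apply (rule nn_integral_cong_AE)
      using assms(3,5) d by (auto simp: AE_measure_pmf_iff measure_pmf.emeasure_eq_measure)
    also have "\<dots> = (\<Sum>u\<in>set_pmf pU. ennreal (pe (k d) u) * pmf pU u)"
      using fin by (simp add: nn_integral_measure_pmf_finite)
    also have "\<dots> = ennreal (\<Sum>u\<in>set_pmf pU. pe (k d) u * pmf pU u)"
    proof -
      have nn: "u \<in> set_pmf pU \<Longrightarrow> pe (k d) u \<ge> 0" for u
        using assms(3,5) d by (metis measure_nonneg subsetD)
      show ?thesis
        by (subst sum_ennreal[symmetric]) (auto simp: nn ennreal_mult)
    qed
    also have "(\<Sum>u\<in>set_pmf pU. pe (k d) u * pmf pU u) = Z d"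
      unfolding Z_def using assms(2,3)
      by (intro sum.mono_neutral_left) (auto simp: set_pmf_iff)
    finally have "emeasure (measure_pmf (session pU E)) (A d) = ennreal (Z d)" .
    moreover have "Z d \<ge> 0"
      unfolding Z_def using assms(5) d
      by (intro sum_nonneg) (metis measure_nonneg mult_nonneg_nonneg pmf_nonneg)
    ultimately show ?thesis
      by (simp add: measure_pmf.emeasure_eq_measure)
  qed
  have eq: "(\<lambda>(u, e). user_aware_est D lam k pe U pU (clicks r e))
      = (\<lambda>x. \<Sum>d\<in>D. (lam d * r d / Z d) * indicator (A d) x)"
    by (auto simp: user_aware_est_def clicks_def Z_def A_def indicator_def intro!: sum.cong)
  have "measure_pmf.expectation (session pU E)
           (\<lambda>(u, e). user_aware_est D lam k pe U pU (clicks r e))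
      = (\<Sum>d\<in>D. (lam d * r d / Z d) * measure_pmf.prob (session pU E) (A d))"
  proof -
    have "measure_pmf.expectation (session pU E) (\<lambda>x. \<Sum>d\<in>D. (lam d * r d / Z d) * indicator (A d) x)
       = (\<Sum>d\<in>D. measure_pmf.expectation (session pU E) (\<lambda>x. (lam d * r d / Z d) * indicator (A d) x))"
      by (rule Bochner_Integration.integral_sum, rule integrable_mult_right) (auto intro!: integrable_real_indicator simp: measure_pmf.emeasure_eq_measure)
    also have "\<dots> = (\<Sum>d\<in>D. (lam d * r d / Z d) * measure_pmf.prob (session pU E) (A d))"
      by (intro sum.cong refl) simp
    finally show ?thesis by (simp only: eq)
  qed
  also have "\<dots> = (\<Sum>d\<in>D. lam d * r d)"
  proof (intro sum.cong refl)
    fix d assume d: "d \<in> D"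
    show "lam d * r d / Z d * measure_pmf.prob (session pU E) (A d) = lam d * r d"
      using PA[OF d] assms(4,6) d by (auto simp: Z_def)
  qed
  finally show ?thesis by (simp add: ideal_loss_def)
qed

end
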